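(* There exists a PBD$(124,\{3,4\})$ of dimension three.
   Context: For a positive integer $v$ and $K \subseteq \{2,3,4,\dots\}$, a pairwise balanced design PBD$(v,K)$ is a pair $(X,\mathcal{B})$ where $X$ is a $v$-set of points and $\mathcal{B}$ is a family of subsets of $X$ (blocks), each of size in $K$, such that any two distinct points of $X$ lie together in exactly one block. A flat (subdesign) is a pair $(Y,\mathcal{B}_Y)$ with $Y \subseteq X$ and $\mathcal{B}_Y = \{B \in \mathcal{B} : B \subseteq Y\}$ such that any two distinct points of $Y$ lie together in exactly one block of $\mathcal{B}_Y$; it is proper if $Y \ne X$. The dimension of the PBD is the maximum integer $d$ such that every set of $d$ points is contained in a proper flat. *)

theory Defs
  imports Main
begin

definition pbd :: "'a set \<Rightarrow> 'a set set \<Rightarrow> nat set \<Rightarrow> bool" where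
  "pbd X B K \<longleftrightarrow> finite X \<and> K \<subseteq> {2..} \<and>
     (\<forall>b\<in>B. b \<subseteq> X \<and> card b \<in> K) \<and>
     (\<forall>x\<in>X. \<forall>y\<in>X. x \<noteq> y \<longrightarrow> (\<exists>!b. b \<in> B \<and> x \<in> b \<and> y \<in> b))"

definition is_flat :: "'a set \<Rightarrow> 'a set set \<Rightarrow> 'a set \<Rightarrow> bool" where
  "is_flat X B Y \<longleftrightarrow> Y \<subseteq> X \<and>
     (\<forall>x\<in>Y. \<forall>y\<in>Y. x \<noteq> y \<longrightarrow> (\<exists>!b. b \<in> {c \<in> B. c \<subseteq> Y} \<and> x \<in> b \<and> y \<in> b))"

definition proper_flat :: "'a set \<Rightarrow> 'a set set \<Rightarrow> 'a set \<Rightarrow> bool" where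
  "proper_flat X B Y \<longleftrightarrow> is_flat X B Y \<and> Y \<noteq> X"

definition dim_prop :: "'a set \<Rightarrow> 'a set set \<Rightarrow> nat \<Rightarrow> bool" where
  "dim_prop X B d \<longleftrightarrow>
     (\<forall>S. S \<subseteq> X \<and> card S = d \<longrightarrow> (\<exists>Y. proper_flat X B Y \<and> S \<subseteq> Y))"

text \<open>Dimension: the maximum d (among d \<le> |X|, i.e. where d-sets of points exist)
  such that every set of d points lies in a proper flat.\<close>
definition pbd_dimension :: "'a set \<Rightarrow> 'a set set \<Rightarrow> nat" where
  "pbd_dimension X B = (GREATEST d. d \<le> card X \<and> dim_prop X B d)"

end

theory Submission
  imports Defs "HOL-Analysis.Analysis"
begin

lemma pbd_pairs: "pbd X B K \<Longrightarrow> \<forall>x\<in>X. \<forall>y\<in>X. x \<noteq> y \<longrightarrow> (\<exists>!b. b \<in> B \<and> x \<in> b \<and> y \<in> b)"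
  unfolding pbd_def by (elim conjE)

lemma pbd_ex1: assumes "pbd X B K" "x \<in> X" "y \<in> X" "x \<noteq> y" shows "\<exists>!b. b \<in> B \<and> x \<in> b \<and> y \<in> b"
  by (rule mp[OF bspec[OF bspec[OF pbd_pairs[OF assms(1)] assms(2)] assms(3)] assms(4)])

lemma flat_intro:
  assumes "pbd X B K" "Y \<subseteq> X"
    "\<And>x y b. x \<in> Y \<Longrightarrow> y \<in> Y \<Longrightarrow> x \<noteq> y \<Longrightarrow> b \<in> B \<Longrightarrow> x \<in> b \<Longrightarrow> y \<in> b \<Longrightarrow> b \<subseteq> Y"
  shows "is_flat X B Y"
  unfolding is_flat_def
proof (intro conjI ballI impI)
  show "Y \<subseteq> X" by fact
  fix x y assume xy: "x \<in> Y" "y \<in> Y" "x \<noteq> y"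
  have "\<exists>!b. b \<in> B \<and> x \<in> b \<and> y \<in> b" using pbd_ex1[OF assms(1)] xy assms(2) by blast
  then obtain b where b: "b \<in> B" "x \<in> b" "y \<in> b" and u: "\<And>c. c \<in> B \<and> x \<in> c \<and> y \<in> c \<Longrightarrow> c = b"
    by (elim ex1E) blast
  have "b \<subseteq> Y" using assms(3)[OF xy b] .
  show "\<exists>!b. b \<in> {c \<in> B. c \<subseteq> Y} \<and> x \<in> b \<and> y \<in> b"
  proof (rule ex1I[of _ b])
    show "b \<in> {c \<in> B. c \<subseteq> Y} \<and> x \<in> b \<and> y \<in> b" using b \<open>b \<subseteq> Y\<close> by simp
    fix c assume "c \<in> {c \<in> B. c \<subseteq> Y} \<and> x \<in> c \<and> y \<in> c"
    then show "c = b" using u by simp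
  qed
qed

lemma flat_block:
  assumes "pbd X B K" "is_flat X B Y" "x \<in> Y" "y \<in> Y" "x \<noteq> y" "b \<in> B" "x \<in> b" "y \<in> b"
  shows "b \<subseteq> Y"
proof -
  have "\<exists>!b. b \<in> {c \<in> B. c \<subseteq> Y} \<and> x \<in> b \<and> y \<in> b"
    using assms(2-5) unfolding is_flat_def by blast
  then obtain c where c: "c \<in> B" "c \<subseteq> Y" "x \<in> c" "y \<in> c" by auto
  have "Y \<subseteq> X" using assms(2) unfolding is_flat_def by blast
  then have "\<exists>!b. b \<in> B \<and> x \<in> b \<and> y \<in> b" using pbd_ex1[OF assms(1)] assms(3-5) by blast
  then have "b = c" using c assms(6-8) by blast
  then show ?thesis using c by simp
qed

lemma dimension_eq3:
  assumes "finite X" "card X \<ge> 4" "dim_prop X B 3"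
    "S0 \<subseteq> X" "card S0 = 4" "\<And>Y. is_flat X B Y \<Longrightarrow> S0 \<subseteq> Y \<Longrightarrow> Y = X"
  shows "pbd_dimension X B = 3"
  unfolding pbd_dimension_def
proof (rule Greatest_equality)
  show "3 \<le> card X \<and> dim_prop X B 3" using assms by simp
  fix d assume d: "d \<le> card X \<and> dim_prop X B d"
  show "d \<le> 3"
  proof (rule ccontr)
    assume "\<not> d \<le> 3"
    then have d4: "d \<ge> 4" by simp
    have fin: "finite (X - S0)" using assms(1) by simp
    have "card (X - S0) = card X - 4" using assms(1,4,5) by (simp add: card_Diff_subset finite_subset)
    then have "d - 4 \<le> card (X - S0)" using d by (simp add: diff_le_mono)
    then obtain T where T: "T \<subseteq> X - S0" "card T = d - 4"
      using obtain_subset_with_card_n by metis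
    have "finite T" using T fin finite_subset by blast
    have "finite S0" using assms(1,4) finite_subset by blast
    have "card (S0 \<union> T) = d" using T \<open>finite T\<close> \<open>finite S0\<close> assms(5) d4
      by (subst card_Un_disjoint) auto
    moreover have "S0 \<union> T \<subseteq> X" using T assms(4) by auto
    ultimately obtain Y where "proper_flat X B Y" "S0 \<union> T \<subseteq> Y"
      using d unfolding dim_prop_def by blast
    then show False using assms(6) unfolding proper_flat_def by blast
  qed
qed

datatype F3 = Z3 | O3 | T3

instantiation F3 :: field
begin
definition "zero_F3 = Z3"
definition "one_F3 = O3"
definition "plus_F3 a b = (case a of Z3 \<Rightarrow> b | O3 \<Rightarrow> (case b of Z3 \<Rightarrow> O3 | O3 \<Rightarrow> T3 | T3 \<Rightarrow> Z3)
   | T3 \<Rightarrow> (case b of Z3 \<Rightarrow> T3 | O3 \<Rightarrow> Z3 | T3 \<Rightarrow> O3))"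
definition "uminus_F3 a = (case a of Z3 \<Rightarrow> Z3 | O3 \<Rightarrow> T3 | T3 \<Rightarrow> O3)"
definition "minus_F3 (a::F3) b = a + - b"
definition "times_F3 a b = (case a of Z3 \<Rightarrow> Z3 | O3 \<Rightarrow> b | T3 \<Rightarrow> - b)"
definition "inverse_F3 (a::F3) = a"
definition "divide_F3 (a::F3) b = a * inverse b"
instance
  by standard (auto simp: zero_F3_def one_F3_def plus_F3_def uminus_F3_def minus_F3_def times_F3_def
      inverse_F3_def divide_F3_def split: F3.splits)
end

lemma UNIV_F3: "(UNIV::F3 set) = {0,1,-1}"
  by (auto simp: zero_F3_def one_F3_def uminus_F3_def intro: F3.exhaust)

instance F3 :: finite by standard (simp add: UNIV_F3)

datatype F4 = Z4 | O4 | W4 | V4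

instantiation F4 :: field
begin
definition "zero_F4 = Z4"
definition "one_F4 = O4"
definition "plus_F4 a b = (case a of Z4 \<Rightarrow> b
   | O4 \<Rightarrow> (case b of Z4 \<Rightarrow> O4 | O4 \<Rightarrow> Z4 | W4 \<Rightarrow> V4 | V4 \<Rightarrow> W4)
   | W4 \<Rightarrow> (case b of Z4 \<Rightarrow> W4 | O4 \<Rightarrow> V4 | W4 \<Rightarrow> Z4 | V4 \<Rightarrow> O4)
   | V4 \<Rightarrow> (case b of Z4 \<Rightarrow> V4 | O4 \<Rightarrow> W4 | W4 \<Rightarrow> O4 | V4 \<Rightarrow> Z4))"
definition "uminus_F4 (a::F4) = a"
definition "minus_F4 (a::F4) b = a + b"
definition "times_F4 a b = (case a of Z4 \<Rightarrow> Z4 | O4 \<Rightarrow> b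
   | W4 \<Rightarrow> (case b of Z4 \<Rightarrow> Z4 | O4 \<Rightarrow> W4 | W4 \<Rightarrow> V4 | V4 \<Rightarrow> O4)
   | V4 \<Rightarrow> (case b of Z4 \<Rightarrow> Z4 | O4 \<Rightarrow> V4 | W4 \<Rightarrow> O4 | V4 \<Rightarrow> W4))"
definition "inverse_F4 a = (case a of Z4 \<Rightarrow> Z4 | O4 \<Rightarrow> O4 | W4 \<Rightarrow> V4 | V4 \<Rightarrow> W4)"
definition "divide_F4 (a::F4) b = a * inverse b"
instance
  by standard (auto simp: zero_F4_def one_F4_def plus_F4_def uminus_F4_def minus_F4_def times_F4_def
      inverse_F4_def divide_F4_def split: F4.splits)
end

lemma UNIV_F4: "(UNIV::F4 set) = {Z4,O4,W4,V4}"
  by (auto intro: F4.exhaust)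
instance F4 :: finite by standard (simp add: UNIV_F4)
lemma card_F4: "card (UNIV::F4 set) = 4" by (simp add: UNIV_F4)

lemma F3_tab [simp]:
  "Z3 = 0" "O3 = 1" "(1::F3) + 1 = T3" "T3 + T3 = 1" "1 + T3 = 0" "T3 + 1 = 0"
  "T3 * T3 = 1" "-(1::F3) = T3" "- T3 = 1" "T3 \<noteq> 0" "T3 \<noteq> 1" "(0::F3) \<noteq> 1" "(2::F3) = T3"
  by (simp_all add: one_add_one[symmetric] zero_F3_def one_F3_def plus_F3_def times_F3_def uminus_F3_def)

lemma F3_cases: "(x::F3) = 0 \<or> x = 1 \<or> x = T3"
  by (cases x) auto

lemma ex_F3: "(\<exists>x::F3. P x) \<longleftrightarrow> P 0 \<or> P 1 \<or> P T3"
  using F3_cases by metis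
lemma all_F3: "(\<forall>x::F3. P x) \<longleftrightarrow> P 0 \<and> P 1 \<and> P T3"
  using F3_cases by metis

type_synonym V = "F3^4"

definition vv :: "F3 \<Rightarrow> F3 \<Rightarrow> F3 \<Rightarrow> F3 \<Rightarrow> V" where
  "vv a b c d = (\<chi> i. if i = 1 then a else if i = 2 then b else if i = 3 then c else d)"

lemma vv_comp [simp]: "vv a b c d $ 1 = a" "vv a b c d $ 2 = b" "vv a b c d $ 3 = c" "vv a b c d $ 4 = d"
  by (simp_all add: vv_def)

lemma vec_eq4: "(x::V) = y \<longleftrightarrow> x$1 = y$1 \<and> x$2 = y$2 \<and> x$3 = y$3 \<and> x$4 = y$4"
  by (simp add: vec_eq_iff forall_4)

definition Linf :: "V set" where
  "Linf = {vv 1 0 0 0, vv 0 1 0 0, vv 1 1 0 0, vv 1 T3 0 0}"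

definition D :: "V set" where "D = {x. x$4 = 1} \<union> Linf"

lemma Linf_iff: "x \<in> Linf \<longleftrightarrow> x$3 = 0 \<and> x$4 = 0 \<and> ((x$1 = 1) \<or> (x$1 = 0 \<and> x$2 = 1))"
  unfolding Linf_def using F3_cases[of "x$2"] by (auto simp: vec_eq4)

lemma D_iff: "x \<in> D \<longleftrightarrow> x$4 = 1 \<or> (x$3 = 0 \<and> x$4 = 0 \<and> ((x$1 = 1) \<or> (x$1 = 0 \<and> x$2 = 1)))"
  by (auto simp: D_def Linf_iff)

lemma span2: "x \<in> vec.span {P, Q} \<longleftrightarrow> (\<exists>a b. x = a *s P + b *s Q)"
  by (auto simp: vec.span_insert vec.span_singleton algebra_simps)

definition lineD :: "V \<Rightarrow> V \<Rightarrow> V set" where "lineD P Q = D \<inter> vec.span {P, Q}"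

lemma lineD_iff: "x \<in> lineD P Q \<longleftrightarrow> x \<in> D \<and> (\<exists>a b. x = a *s P + b *s Q)"
  by (simp add: lineD_def span2)

lemma T3_mult [simp]: "T3 * x = 1 \<longleftrightarrow> x = T3" "T3 * x = 0 \<longleftrightarrow> x = 0" "T3 * x = T3 \<longleftrightarrow> x = 1"
  using F3_cases[of x] by auto

lemma D_nz: "P \<in> D \<Longrightarrow> P \<noteq> 0"
  by (auto simp: D_iff)

lemma D_indep1: "P \<in> D \<Longrightarrow> Q \<in> D \<Longrightarrow> P \<noteq> Q \<Longrightarrow> Q \<noteq> k *s P"
  using F3_cases[of k] 
  by (auto simp: D_iff vec_eq4)

lemma lineD_explicit: "lineD P Q = D \<inter> {0, P, T3*s P, Q, T3*s Q, P+Q, P+T3*s Q, T3*s P+Q, T3*s P+T3*s Q}"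
  unfolding lineD_iff set_eq_iff
  by (simp add: ex_F3 del: F3_tab) (auto simp: eq_commute)

lemma lineD_sym: "lineD P Q = lineD Q P"
  by (simp add: lineD_def insert_commute)

lemma zero_notin_D: "0 \<notin> D" by (simp add: D_iff)

lemma D_Linf_T3: "u \<in> D \<Longrightarrow> u$4 = 0 \<Longrightarrow> T3 *s u \<notin> D"
  by (auto simp: D_iff)

lemma lineD_AA:
  assumes "P$4 = 1" "Q$4 = 1"
  shows "lineD P Q = {P, Q, T3*s P+T3*s Q} \<union> (D \<inter> {P+T3*s Q, T3*s P+Q})"
  using assms unfolding lineD_explicit by (auto simp: D_iff)

lemma lineD_AI:
  assumes "P$4 = 1" "Q \<in> D" "Q$4 = 0"
  shows "lineD P Q = {P, Q, P+Q, P+T3*s Q}"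
  using assms D_Linf_T3[of Q] unfolding lineD_explicit by (auto simp: D_iff)

lemma cramer:
  fixes p1 p2 q1 q2 x1 x2 :: "'a::field"
  assumes "p1*q2 - p2*q1 \<noteq> 0"
  shows "(x1*q2 - x2*q1)/(p1*q2 - p2*q1) * p1 + (p1*x2 - p2*x1)/(p1*q2 - p2*q1) * q1 = x1"
    "(x1*q2 - x2*q1)/(p1*q2 - p2*q1) * p2 + (p1*x2 - p2*x1)/(p1*q2 - p2*q1) * q2 = x2"
proof -
  let ?d = "p1*q2 - p2*q1"
  have e1: "(x1*q2 - x2*q1) * p1 + (p1*x2 - p2*x1) * q1 = x1 * ?d" by algebra
  have e2: "(x1*q2 - x2*q1) * p2 + (p1*x2 - p2*x1) * q2 = x2 * ?d" by algebra
  have "(x1*q2 - x2*q1)/?d * p1 + (p1*x2 - p2*x1)/?d * q1 = ((x1*q2 - x2*q1) * p1 + (p1*x2 - p2*x1) * q1) / ?d"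
    by (simp add: add_divide_distrib)
  also have "\<dots> = x1" using e1 assms by simp
  finally show "(x1*q2 - x2*q1)/?d * p1 + (p1*x2 - p2*x1)/?d * q1 = x1" .
  have "(x1*q2 - x2*q1)/?d * p2 + (p1*x2 - p2*x1)/?d * q2 = ((x1*q2 - x2*q1) * p2 + (p1*x2 - p2*x1) * q2) / ?d"
    by (simp add: add_divide_distrib)
  also have "\<dots> = x2" using e2 assms by simp
  finally show "(x1*q2 - x2*q1)/?d * p2 + (p1*x2 - p2*x1)/?d * q2 = x2" .
qed

lemma span_W:
  fixes P Q x :: V
  assumes "P$3=0" "P$4=0" "Q$3=0" "Q$4=0" "x$3=0" "x$4=0" "P$1*Q$2 - P$2*Q$1 \<noteq> 0"
  shows "x = ((x$1*Q$2 - x$2*Q$1)/(P$1*Q$2 - P$2*Q$1)) *s P + ((P$1*x$2 - P$2*x$1)/(P$1*Q$2 - P$2*Q$1)) *s Q"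
  using assms cramer[OF assms(7), of "x$1" "x$2"] by (simp add: vec_eq4)

lemma det_Linf: "P \<in> Linf \<Longrightarrow> Q \<in> Linf \<Longrightarrow> P \<noteq> Q \<Longrightarrow> P$1*Q$2 - P$2*Q$1 \<noteq> 0"
  unfolding Linf_def by (auto simp: vec_eq4)

lemma lineD_II:
  assumes "P \<in> D" "Q \<in> D" "P$4 = 0" "Q$4 = 0" "P \<noteq> Q"
  shows "lineD P Q = Linf"
proof
  show "lineD P Q \<subseteq> Linf"
    using assms unfolding lineD_explicit by (auto simp: D_def)
  have "P \<in> Linf" "Q \<in> Linf" using assms by (auto simp: D_def)
  show "Linf \<subseteq> lineD P Q"
  proof (rule subsetI)
    fix x assume x: "x \<in> Linf"
    have d: "P$1*Q$2 - P$2*Q$1 \<noteq> 0" using det_Linf \<open>P \<in> Linf\<close> \<open>Q \<in> Linf\<close> assms(5) by blast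
    have "x$3 = 0" "x$4 = 0" "P$3 = 0" "Q$3 = 0" using x \<open>P \<in> Linf\<close> \<open>Q \<in> Linf\<close> by (auto simp: Linf_iff)
    then have "x = ((x$1*Q$2 - x$2*Q$1)/(P$1*Q$2 - P$2*Q$1)) *s P + ((P$1*x$2 - P$2*x$1)/(P$1*Q$2 - P$2*Q$1)) *s Q"
      using span_W d assms(3,4) by blast
    then show "x \<in> lineD P Q" unfolding lineD_iff using x by (auto simp: D_def)
  qed
qed

lemma sc1: "T3*p + T3*q = p \<longleftrightarrow> q = (p::F3)"
  using F3_cases[of p] F3_cases[of q] by auto
lemma sc2: "T3*p + T3*q = q \<longleftrightarrow> q = (p::F3)"
  using F3_cases[of p] F3_cases[of q] by auto

lemma M_neq: "T3*s P + T3*s Q = P \<longleftrightarrow> Q = P" "T3*s P + T3*s Q = Q \<longleftrightarrow> Q = P"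
  by (simp_all add: vec_eq_iff sc1 sc2)

lemma card3: "a\<noteq>b \<Longrightarrow> a\<noteq>c \<Longrightarrow> b\<noteq>c \<Longrightarrow> card {a,b,c} = 3" by simp
lemma card4: "a\<noteq>b \<Longrightarrow> a\<noteq>c \<Longrightarrow> a\<noteq>d \<Longrightarrow> b\<noteq>c \<Longrightarrow> b\<noteq>d \<Longrightarrow> c\<noteq>d \<Longrightarrow> card {a,b,c,d} = 4" by simp

lemma T3q: "T3 * q = q \<longleftrightarrow> q = (0::F3)" using F3_cases[of q] by auto

lemma neq4: "x$4 \<noteq> y$4 \<Longrightarrow> (x::V) \<noteq> y" by auto




lemma t2: fixes P Q :: V assumes "P$4 = 1" "Q \<in> D" "Q$4 = 0" "P \<noteq> Q" shows "card (lineD P Q) = 4"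
proof -
    have L: "lineD P Q = {P, Q, P+Q, P+T3*s Q}" by (rule lineD_AI) (use assms in auto)
    have "Q \<noteq> 0" using assms D_nz by auto
    then have a: "P+Q \<noteq> P+T3*s Q" "P \<noteq> P+Q" "P \<noteq> P+T3*s Q"
      by (auto simp: vec_eq_iff T3q)
    have b: "Q \<noteq> P+Q" "Q \<noteq> P+T3*s Q" by (rule neq4, use assms in simp)+
    show ?thesis unfolding L by (rule card4) (use a b assms(4) in auto)
qed

lemma card_Linf: "card Linf = 4"
  unfolding Linf_def by (rule card4) (simp_all add: vec_eq4)

lemma card_AA: fixes P Q :: V assumes 1: "P$4=1" "Q$4=1" and "P\<noteq>Q"
  shows "card (lineD P Q) = 3 \<or> card (lineD P Q) = 4"
proof -
    let ?M = "T3*s P+T3*s Q" and ?u = "P+T3*s Q" and ?v = "T3*s P+Q"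
    have v: "?v = T3 *s ?u" by (simp add: vec_eq_iff algebra_simps)
    have u4: "?u$4 = 0" using 1 by simp
    have v4: "?v$4 = 0" using 1 by simp
    have nb: "\<not> (?u \<in> D \<and> ?v \<in> D)" using D_Linf_T3[OF _ u4] v by metis
    have d: "P \<noteq> ?M" "Q \<noteq> ?M" using M_neq assms(3) by metis+
    have M4: "?M$4 = 1" using 1 by simp
    have L: "lineD P Q = {P, Q, ?M} \<union> (D \<inter> {?u, ?v})" by (rule lineD_AA[OF 1])
    show ?thesis
    proof (cases "?u \<in> D")
      case True
      then have L2: "lineD P Q = {?u, P, Q, ?M}" using L nb by auto
      have "?u \<noteq> P" "?u \<noteq> Q" "?u \<noteq> ?M" by (rule neq4, use u4 1 M4 in simp)+
      then show ?thesis unfolding L2 using d assms(3) by (intro disjI2 card4) auto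
    next
      case False
      show ?thesis
      proof (cases "?v \<in> D")
        case True
        then have L2: "lineD P Q = {?v, P, Q, ?M}" using L False by auto
        have "?v \<noteq> P" "?v \<noteq> Q" "?v \<noteq> ?M" by (rule neq4, use v4 1 M4 in simp)+
        then show ?thesis unfolding L2 using d assms(3) by (intro disjI2 card4) auto
      next
        case F2: False
        then have L2: "lineD P Q = {P, Q, ?M}" using L False by auto
        then show ?thesis unfolding L2 using d assms(3) by (intro disjI1 card3) auto
      qed
    qed
qed

lemma card_lineD:
  assumes "P \<in> D" "Q \<in> D" "P \<noteq> Q"
  shows "card (lineD P Q) = 3 \<or> card (lineD P Q) = 4"
proof -
  consider "P$4 = 1" "Q$4 = 1" | "P$4 = 1" "Q$4 = 0" | "P$4 = 0" "Q$4 = 1" | "P$4 = 0" "Q$4 = 0"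
    using assms by (auto simp: D_iff)
  then show ?thesis
  proof cases
    case 1 then show ?thesis using card_AA assms by blast
  next
    case 2 then show ?thesis using t2 assms by blast
  next
    case 3 then show ?thesis using t2[of Q P] assms lineD_sym by metis
  next
    case 4
    then have "lineD P Q = Linf" using assms lineD_II by auto
    then show ?thesis using card_Linf by simp
  qed
qed

lemma indep2: assumes "P \<in> D" "Q \<in> D" "P \<noteq> Q" shows "vec.independent {P, Q}"
proof -
  have "vec.independent {Q}" using D_nz[OF assms(2)]
    by (simp add: vec.independent_insert)
  moreover have "P \<notin> vec.span {Q}"
    using D_indep1[OF assms(2,1)] assms(3) by (auto simp: vec.span_singleton)
  ultimately show ?thesis using assms(3) by (simp add: vec.independent_insert)
qed

lemma dim2: assumes "P \<in> D" "Q \<in> D" "P \<noteq> Q" shows "vec.dim (vec.span {P, Q}) = 2"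
  using vec.dim_span_eq_card_independent[OF indep2[OF assms]] assms(3) by simp

lemma in_lineD: "P \<in> D \<Longrightarrow> Q \<in> D \<Longrightarrow> P \<in> lineD P Q \<and> Q \<in> lineD P Q"
  by (simp add: lineD_def vec.span_base)

lemma lineD_sub: "lineD P Q \<subseteq> D" by (simp add: lineD_def)

lemma span_sub: assumes "P \<in> vec.span S" "Q \<in> vec.span S" shows "vec.span {P,Q} \<subseteq> vec.span S"
  using assms by (intro vec.span_minimal) auto

lemma card2_le: "card {R,S} \<le> 2" by (cases "R = S") auto

lemma lineD_unique:
  assumes "P \<in> D" "Q \<in> D" "P \<noteq> Q" "R \<in> D" "S \<in> D" "R \<noteq> S" "P \<in> lineD R S" "Q \<in> lineD R S"
  shows "lineD R S = lineD P Q"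
proof -
  have sub: "vec.span {P,Q} \<subseteq> vec.span {R,S}" using assms(7,8) by (intro span_sub) (auto simp: lineD_def)
  have "vec.dim (vec.span {R,S}) \<le> 2"
    using vec.dim_le_card[of "vec.span {R,S}" "{R,S}"] using card2_le[of R S] by (simp add: vec.span_span)
  then have "vec.span {P,Q} = vec.span {R,S}" using dim2[OF assms(1-3)] sub
    by (intro vec.subspace_dim_equal) auto
  then show ?thesis by (simp add: lineD_def)
qed

definition O0 :: V where "O0 = vv 0 0 0 1"
definition A1 :: V where "A1 = vv 1 0 0 1"
definition A2 :: V where "A2 = vv 0 1 0 1"
definition A3 :: V where "A3 = vv 0 0 1 1"
definition E1 :: V where "E1 = vv 1 0 0 0"
definition E2 :: V where "E2 = vv 0 1 0 0"
definition E12 :: V where "E12 = vv 1 T3 0 0"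

lemma axis_eqs: "axis 1 1 = E1" "axis 2 1 = E2" "axis 4 1 = O0" "axis 3 1 = A3 - O0"
  by (simp_all add: vec_eq4 axis_def E1_def E2_def O0_def A3_def)

lemma basic_in_D: "E1 \<in> D" "E2 \<in> D" "O0 \<in> D" "A3 \<in> D" "A1 \<in> D" "A2 \<in> D" "E12 \<in> D"
  by (simp_all add: D_iff E1_def E2_def O0_def A3_def A1_def A2_def E12_def)

lemma span_full:
  assumes "E1 \<in> vec.span S" "E2 \<in> vec.span S" "O0 \<in> vec.span S" "A3 \<in> vec.span S"
  shows "vec.span S = UNIV"
proof -
  have "\<forall>i::4. axis i 1 \<in> vec.span S"
    unfolding forall_4 axis_eqs using assms vec.span_diff by auto
  then have "cart_basis \<subseteq> vec.span S" by (auto simp: cart_basis_def)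
  then have "vec.span cart_basis \<subseteq> vec.span S" using vec.span_minimal by blast
  then show ?thesis by auto
qed

lemma flat3_proper:
  fixes P Q R :: V
  shows "D \<inter> vec.span {P,Q,R} \<noteq> D"
proof
  assume h: "D \<inter> vec.span {P,Q,R} = D"
  then have "vec.span {P,Q,R} = UNIV" using basic_in_D by (intro span_full) auto
  then have "vec.dim (UNIV :: V set) \<le> card {P,Q,R}"
    using vec.dim_le_card[of "UNIV :: V set" "{P,Q,R}"] by simp
  moreover have "card {P,Q,R} \<le> 3" by (simp add: card_insert_if)
  ultimately show False by (simp add: card_cart_basis)
qed

lemma flat3_closed:
  assumes "x \<in> D \<inter> vec.span {P,Q,R}" "y \<in> D \<inter> vec.span {P,Q,R}"
  shows "lineD x y \<subseteq> D \<inter> vec.span {P,Q,R}"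
  using assms span_sub[of x "{P,Q,R}" y] by (auto simp: lineD_def)

definition lclosed :: "V set \<Rightarrow> bool" where
  "lclosed Z \<longleftrightarrow> (\<forall>x\<in>Z. \<forall>y\<in>Z. x \<noteq> y \<longrightarrow> lineD x y \<subseteq> Z)"

lemma sA: "T3*(a+u) + T3*(a+w) = a + (T3*u + T3*w :: F3)"
  using F3_cases[of a] F3_cases[of u] F3_cases[of w] by auto
lemma sB: "T3*(T3*u) + T3*(T3*w) = u + (w :: F3)"
  using F3_cases[of u] F3_cases[of w] by auto
lemma sC: "T3*a + T3*a = (a::F3)"
  using F3_cases[of a] by auto

lemma sD: "x = T3 * a + (a + (x::F3))"
  using F3_cases[of a] F3_cases[of x] by auto

lemma third_in:
  assumes "lclosed Z" "P \<in> Z" "Q \<in> Z" "P$4 = 1" "Q$4 = 1"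
  shows "T3*s P + T3*s Q \<in> Z"
proof (cases "P = Q")
  case True
  have "T3*s P + T3*s P = P" by (simp add: vec_eq_iff sC)
  then show ?thesis using True assms by simp
next
  case False
  have "T3*s P + T3*s Q \<in> lineD P Q" using lineD_AA[OF assms(4,5)] by auto
  then show ?thesis using assms False unfolding lclosed_def by blast
qed

lemma closure_D:
  assumes cl: "lclosed Z" and z: "O0 \<in> Z" "A1 \<in> Z" "A2 \<in> Z" "A3 \<in> Z"
  shows "D \<subseteq> Z"
proof -
  define U where "U = {u. u$4 = 0 \<and> O0 + u \<in> Z}"
  have g: "T3*s u + T3*s w \<in> U" if "u \<in> U" "w \<in> U" for u w
  proof -
    have "T3*s (O0+u) + T3*s (O0+w) \<in> Z"
      using that by (intro third_in[OF cl]) (auto simp: U_def O0_def)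
    moreover have "T3*s (O0+u) + T3*s (O0+w) = O0 + (T3*s u + T3*s w)"
      by (simp add: vec_eq_iff sA)
    ultimately show ?thesis using that by (simp add: U_def)
  qed
  have U0: "0 \<in> U" using z by (simp add: U_def)
  have neg: "T3 *s u \<in> U" if "u \<in> U" for u
    using g[OF U0 that] by simp
  have add: "u + w \<in> U" if "u \<in> U" "w \<in> U" for u w
  proof -
    have "T3*s (T3*s u) + T3*s (T3*s w) = u + w" by (simp add: vec_eq_iff sB)
    then show ?thesis using g[OF neg[OF that(1)] neg[OF that(2)]] by simp
  qed
  have sc: "c *s u \<in> U" if "u \<in> U" for c u
    using F3_cases[of c] U0 that neg by auto
  have e1: "vv 1 0 0 0 \<in> U" "vv 0 1 0 0 \<in> U" "vv 0 0 1 0 \<in> U"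
  proof -
    have "O0 + vv 1 0 0 0 = A1" "O0 + vv 0 1 0 0 = A2" "O0 + vv 0 0 1 0 = A3"
      by (simp_all add: vec_eq4 O0_def A1_def A2_def A3_def)
    then show "vv 1 0 0 0 \<in> U" "vv 0 1 0 0 \<in> U" "vv 0 0 1 0 \<in> U" using z by (simp_all add: U_def)
  qed
  have allU: "u \<in> U" if "u$4 = 0" for u
  proof -
    have "u = (u$1) *s vv 1 0 0 0 + (u$2) *s vv 0 1 0 0 + (u$3) *s vv 0 0 1 0"
      using that by (simp add: vec_eq4)
    moreover have "(u$1) *s vv 1 0 0 0 + (u$2) *s vv 0 1 0 0 + (u$3) *s vv 0 0 1 0 \<in> U"
      using add sc e1 by metis
    ultimately show ?thesis by simp
  qed
  have aff: "x \<in> Z" if "x$4 = 1" for x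
  proof -
    have "x - O0 \<in> U" using that by (intro allU) (simp add: O0_def)
    then show ?thesis by (simp add: U_def)
  qed
  show ?thesis
  proof
    fix x assume x: "x \<in> D"
    show "x \<in> Z"
    proof (cases "x$4 = 1")
      case True then show ?thesis by (rule aff)
    next
      case False
      then have x4: "x$4 = 0" using x by (auto simp: D_iff)
      have a: "O0 + x \<in> Z" "O0 \<in> Z" using x4 aff by (auto simp: O0_def)
      have ne: "O0 \<noteq> O0 + x" using D_nz[OF x] by auto
      have "x = T3 *s O0 + 1 *s (O0 + x)" by (simp add: vec_eq_iff sD)
      then have "x \<in> lineD O0 (O0 + x)" unfolding lineD_iff using x by blast
      then show ?thesis using cl a ne unfolding lclosed_def by blast
    qed
  qed
qed

lemma card_F3: "card (UNIV::F3 set) = 3"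
  by (simp add: UNIV_F3)

lemma finite_D: "finite D" by simp

lemma card_aff: "card {x::V. x$4 = 1} = 27"
proof -
  have "{x::V. x$4 = 1} = (\<lambda>(a,b,c). vv a b c 1) ` (UNIV :: (F3 \<times> F3 \<times> F3) set)"
  proof (rule set_eqI)
    fix x :: V
    show "x \<in> {x. x$4 = 1} \<longleftrightarrow> x \<in> (\<lambda>(a,b,c). vv a b c 1) ` UNIV"
    proof
      assume "x \<in> {x. x$4 = 1}"
      then have "x = vv (x$1) (x$2) (x$3) 1" by (simp add: vec_eq4)
      then show "x \<in> (\<lambda>(a,b,c). vv a b c 1) ` UNIV" by (metis (mono_tags, lifting) case_prod_conv rangeI)
    qed auto
  qed
  moreover have "inj (\<lambda>(a,b,c). vv a b c (1::F3))"
    by (auto simp: inj_def vec_eq4)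
  ultimately show ?thesis
    by (simp add: card_image card_cartesian_product UNIV_Times_UNIV[symmetric] card_F3 del: UNIV_Times_UNIV)
qed

lemma card_D: "card D = 31"
proof -
  have "{x::V. x$4 = 1} \<inter> Linf = {}" by (auto simp: Linf_iff)
  then show ?thesis unfolding D_def using card_aff card_Linf
    by (simp add: card_Un_disjoint)
qed

definition BD :: "V set set" where "BD = {lineD P Q | P Q. P \<in> D \<and> Q \<in> D \<and> P \<noteq> Q}"

lemma BD_props: assumes "l \<in> BD" shows "l \<subseteq> D" "finite l" "card l = 3 \<or> card l = 4"
  using assms lineD_sub card_lineD finite_subset[OF _ finite_D] unfolding BD_def by blast+

lemma BD_unique: assumes "l \<in> BD" "P \<in> l" "Q \<in> l" "P \<noteq> Q" shows "l = lineD P Q"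
proof -
  obtain R S where "l = lineD R S" "R \<in> D" "S \<in> D" "R \<noteq> S" using assms(1) unfolding BD_def by blast
  moreover have "P \<in> D" "Q \<in> D" using assms BD_props(1) by blast+
  ultimately show ?thesis using lineD_unique assms by metis
qed

lemma lineD_in_BD: "P \<in> D \<Longrightarrow> Q \<in> D \<Longrightarrow> P \<noteq> Q \<Longrightarrow> lineD P Q \<in> BD"
  unfolding BD_def by blast

definition theta :: "V set \<Rightarrow> V \<Rightarrow> F4" where "theta l = (SOME f. inj_on f l)"

lemma theta_inj: assumes "finite l" "card l \<le> 4" shows "inj_on (theta l) l"
proof -
  have "\<exists>f. f ` l \<subseteq> (UNIV::F4 set) \<and> inj_on f l"
    using card_le_inj[of l "UNIV::F4 set"] assms card_F4 by simp
  then have "\<exists>f::V \<Rightarrow> F4. inj_on f l" by blast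
  then show ?thesis unfolding theta_def by (rule someI_ex)
qed

lemma theta_BD: "l \<in> BD \<Longrightarrow> inj_on (theta l) l"
  using BD_props[of l] theta_inj by fastforce

type_synonym XP = "V \<times> F4"

definition XX :: "XP set" where "XX = D \<times> UNIV"
definition grp :: "V \<Rightarrow> XP set" where "grp P = {P} \<times> UNIV"
definition tdb :: "V set \<Rightarrow> F4 \<Rightarrow> F4 \<Rightarrow> XP set" where
  "tdb l a b = (\<lambda>P. (P, a + theta l P * b)) ` l"
definition BX :: "XP set set" where
  "BX = {grp P | P. P \<in> D} \<union> {tdb l a b | l a b. l \<in> BD}"

lemma tdb_mem: "(P, s) \<in> tdb l a b \<longleftrightarrow> P \<in> l \<and> s = a + theta l P * b"
  unfolding tdb_def by auto

lemma grp_mem: "(P, s) \<in> grp Q \<longleftrightarrow> P = Q"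
  unfolding grp_def by auto

lemma td_solve:
  assumes "l \<in> BD" "P \<in> l" "Q \<in> l" "P \<noteq> Q"
  shows "\<exists>a b. (P,s) \<in> tdb l a b \<and> (Q,t) \<in> tdb l a b"
proof -
  let ?p = "theta l P" and ?q = "theta l Q"
  have ne: "?p \<noteq> ?q" using theta_BD[OF assms(1)] assms(2-4) by (auto dest: inj_onD)
  then have ne': "?p - ?q \<noteq> 0" by simp
  define b where "b = (s - t) / (?p - ?q)"
  define a where "a = s - ?p * b"
  have "s = a + ?p * b" by (simp add: a_def)
  moreover have "t = a + ?q * b"
  proof -
    have "(?p - ?q) * b = s - t" using ne' by (simp add: b_def)
    then show ?thesis by (simp add: a_def algebra_simps)
  qed
  ultimately show ?thesis using assms(2,3) by (auto simp: tdb_mem)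
qed

lemma td_uniq:
  assumes "p \<noteq> (q::F4)" "s = a + p*b" "t = a + q*b" "s = a' + p*b'" "t = a' + q*b'"
  shows "a = a' \<and> b = b'"
proof -
  have "(p - q) * (b - b') = (a + p*b) - (a + q*b) - ((a' + p*b') - (a' + q*b'))" by (simp add: algebra_simps)
  also have "\<dots> = 0" using assms(2-5) by simp
  finally have "(p - q) * (b - b') = 0" .
  then have "b = b'" using assms(1) by simp
  then show ?thesis using assms(2,4) by simp
qed

lemma tdb_card: "l \<in> BD \<Longrightarrow> card (tdb l a b) = card l"
  unfolding tdb_def by (rule card_image) (auto simp: inj_on_def)

lemma grp_card: "card (grp P) = 4"
  unfolding grp_def by (simp add: card_cartesian_product card_F4)

lemma finite_XX: "finite XX" by (simp add: XX_def)

lemma card_XX: "card XX = 124"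
  by (simp add: XX_def card_cartesian_product card_D card_F4)

lemma tdb_sub: "l \<in> BD \<Longrightarrow> tdb l a b \<subseteq> XX"
  using BD_props(1) unfolding tdb_def XX_def by blast

lemma grp_sub: "P \<in> D \<Longrightarrow> grp P \<subseteq> XX"
  unfolding grp_def XX_def by blast

lemma tdb_same: "(P,s) \<in> tdb l a b \<Longrightarrow> (P,t) \<in> tdb l a b \<Longrightarrow> s = t"
  by (simp add: tdb_mem)

lemma blocks_X: "b \<in> BX \<Longrightarrow> b \<subseteq> XX \<and> card b \<in> {3,4}"
proof -
  assume "b \<in> BX"
  then consider P where "P \<in> D" "b = grp P" | l a c where "l \<in> BD" "b = tdb l a c"
    unfolding BX_def by blast
  then show ?thesis
  proof cases
    case 1 then show ?thesis using grp_sub grp_card by auto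
  next
    case 2 then show ?thesis using tdb_sub tdb_card BD_props(3) by auto
  qed
qed

lemma pairs_X: "x \<in> XX \<Longrightarrow> y \<in> XX \<Longrightarrow> x \<noteq> y \<Longrightarrow> \<exists>!b. b \<in> BX \<and> x \<in> b \<and> y \<in> b"
proof -
  assume xy: "x \<in> XX" "y \<in> XX" "x \<noteq> y"
  obtain P s where x: "x = (P,s)" by (cases x)
  obtain Q t where y: "y = (Q,t)" by (cases y)
  have PQ: "P \<in> D" "Q \<in> D" using xy x y by (auto simp: XX_def)
  show "\<exists>!b. b \<in> BX \<and> x \<in> b \<and> y \<in> b"
  proof (cases "P = Q")
    case True
    then have st: "s \<noteq> t" using xy x y by auto
    show ?thesis
    proof (rule ex1I[of _ "grp P"])
      show "grp P \<in> BX \<and> x \<in> grp P \<and> y \<in> grp P"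
        using PQ True by (auto simp: BX_def x y grp_mem)
      fix b assume b: "b \<in> BX \<and> x \<in> b \<and> y \<in> b"
      then consider P' where "b = grp P'" | l a c where "b = tdb l a c"
        unfolding BX_def by blast
      then show "b = grp P"
      proof cases
        case 1 then show ?thesis using b by (simp add: x grp_mem)
      next
        case 2 then show ?thesis using b st True x y tdb_same by blast
      qed
    qed
  next
    case False
    let ?l = "lineD P Q"
    have l: "?l \<in> BD" using PQ False by (rule lineD_in_BD)
    have inl: "P \<in> ?l" "Q \<in> ?l" using in_lineD PQ by auto
    obtain a c where ac: "(P,s) \<in> tdb ?l a c" "(Q,t) \<in> tdb ?l a c"
      using td_solve[OF l inl False] by blast
    show ?thesis
    proof (rule ex1I[of _ "tdb ?l a c"])
      show "tdb ?l a c \<in> BX \<and> x \<in> tdb ?l a c \<and> y \<in> tdb ?l a c"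
        using l ac by (auto simp: BX_def x y)
      fix b assume b: "b \<in> BX \<and> x \<in> b \<and> y \<in> b"
      then consider P' where "b = grp P'" | l' a' c' where "l' \<in> BD" "b = tdb l' a' c'"
        unfolding BX_def by blast
      then show "b = tdb ?l a c"
      proof cases
        case 1 then show ?thesis using b False by (simp add: x y grp_mem)
      next
        case 2
        have "P \<in> l'" "Q \<in> l'" using b 2 by (auto simp: x y tdb_mem)
        then have ll: "l' = ?l" using BD_unique[OF 2(1) _ _ False] by simp
        have ne: "theta ?l P \<noteq> theta ?l Q" using theta_BD[OF l] inl False by (auto dest: inj_onD)
        have "s = a' + theta ?l P * c'" "t = a' + theta ?l Q * c'" using b 2 ll by (auto simp: x y tdb_mem)
        moreover have "s = a + theta ?l P * c" "t = a + theta ?l Q * c" using ac by (auto simp: tdb_mem)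
        ultimately have "a' = a \<and> c' = c" using td_uniq[OF ne] by metis
        then show ?thesis using 2 ll by simp
      qed
    qed
  qed
qed


lemma pbd_X: "pbd XX BX {3,4}"
  unfolding pbd_def using finite_XX blocks_X pairs_X by auto

lemma BX_cases:
  assumes "b \<in> BX"
  obtains P where "P \<in> D" "b = grp P" | l a c where "l \<in> BD" "b = tdb l a c"
  using assms unfolding BX_def by blast

lemma dim3_X: "dim_prop XX BX 3"
  unfolding dim_prop_def
proof (intro allI impI)
  fix S assume S: "S \<subseteq> XX \<and> card S = 3"
  then obtain x y z where xyz: "S = {x,y,z}" by (metis card_3_iff)
  let ?F = "D \<inter> vec.span {fst x, fst y, fst z}"
  let ?Y = "?F \<times> (UNIV :: F4 set)"
  have YX: "?Y \<subseteq> XX" by (auto simp: XX_def)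
  have flat: "is_flat XX BX ?Y"
  proof (rule flat_intro[OF pbd_X YX])
    fix u w b assume uw: "u \<in> ?Y" "w \<in> ?Y" "u \<noteq> w" "b \<in> BX" "u \<in> b" "w \<in> b"
    from uw(4) show "b \<subseteq> ?Y"
    proof (cases rule: BX_cases)
      case (1 P)
      then have "fst u = P" using uw(5) by (cases u) (simp add: grp_mem)
      then show ?thesis using 1 uw(1) by (auto simp: grp_def)
    next
      case (2 l a c)
      obtain P s where u: "u = (P,s)" by (cases u)
      obtain Q t where w: "w = (Q,t)" by (cases w)
      have inl: "P \<in> l" "Q \<in> l" using uw 2 u w by (auto simp: tdb_mem)
      have "P \<noteq> Q" using uw(3,5,6) 2 u w tdb_same by blast
      then have "l = lineD P Q" using BD_unique[OF 2(1) inl] by simp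
      moreover have "lineD P Q \<subseteq> ?F" using uw(1,2) u w by (intro flat3_closed) auto
      ultimately show ?thesis using 2 by (auto simp: tdb_def)
    qed
  qed
  obtain P where P: "P \<in> D" "P \<notin> ?F" using flat3_proper by blast
  have "(P, 0) \<in> XX" "(P,0) \<notin> ?Y" using P by (auto simp: XX_def)
  then have "?Y \<noteq> XX" by blast
  moreover have "S \<subseteq> ?Y" using S xyz by (auto simp: XX_def vec.span_base)
  ultimately show "\<exists>Y. proper_flat XX BX Y \<and> S \<subseteq> Y" using flat unfolding proper_flat_def by blast
qed

context
  fixes Y assumes fl: "is_flat XX BX Y"
begin

lemma blkY: "b \<in> BX \<Longrightarrow> u \<in> Y \<Longrightarrow> w \<in> Y \<Longrightarrow> u \<noteq> w \<Longrightarrow> u \<in> b \<Longrightarrow> w \<in> b \<Longrightarrow> b \<subseteq> Y"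
  using flat_block[OF pbd_X fl] by blast

lemma R2:
  assumes "(P,c) \<in> Y" "(Q,c) \<in> Y" "P \<in> D" "Q \<in> D" "P \<noteq> Q" "R \<in> lineD P Q"
  shows "(R,c) \<in> Y"
proof -
  have l: "lineD P Q \<in> BD" using assms by (intro lineD_in_BD)
  have bx: "tdb (lineD P Q) c 0 \<in> BX" using l by (auto simp: BX_def)
  have m: "(P,c) \<in> tdb (lineD P Q) c 0" "(Q,c) \<in> tdb (lineD P Q) c 0"
    using in_lineD[OF assms(3,4)] by (auto simp: tdb_mem)
  have "tdb (lineD P Q) c 0 \<subseteq> Y" by (rule blkY[OF bx assms(1,2) _ m]) (use assms(5) in simp)
  moreover have "(R,c) \<in> tdb (lineD P Q) c 0" using assms(6) by (simp add: tdb_mem)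
  ultimately show ?thesis by blast
qed

lemma grpY:
  assumes "(P,s) \<in> Y" "(P,t) \<in> Y" "s \<noteq> t" "P \<in> D"
  shows "grp P \<subseteq> Y"
proof -
  have "grp P \<in> BX" using assms(4) by (auto simp: BX_def)
  then show ?thesis by (rule blkY[of "grp P" "(P,s)" "(P,t)"]) (use assms in \<open>auto simp: grp_mem\<close>)
qed

lemma rainbow:
  assumes "(P,s) \<in> Y" "(Q,t) \<in> Y" "P \<in> D" "Q \<in> D" "P \<noteq> Q" "s \<noteq> t"
    "R \<in> lineD P Q" "R \<noteq> P" "R \<noteq> Q"
  shows "\<exists>v. (R,v) \<in> Y \<and> v \<noteq> s \<and> v \<noteq> t"
proof -
  let ?l = "lineD P Q"
  have l: "?l \<in> BD" using assms by (intro lineD_in_BD)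
  have inl: "P \<in> ?l" "Q \<in> ?l" using in_lineD[OF assms(3,4)] by auto
  obtain a c where ac: "(P,s) \<in> tdb ?l a c" "(Q,t) \<in> tdb ?l a c"
    using td_solve[OF l inl assms(5)] by blast
  have bx: "tdb ?l a c \<in> BX" using l by (auto simp: BX_def)
  have sub: "tdb ?l a c \<subseteq> Y" by (rule blkY[OF bx assms(1,2) _ ac]) (use assms(5) in simp)
  have c0: "c \<noteq> 0" using ac assms(6) by (auto simp: tdb_mem)
  have ne: "theta ?l R \<noteq> theta ?l P" "theta ?l R \<noteq> theta ?l Q" using theta_BD[OF l] inl assms(7,8,9) by (auto dest: inj_onD)
  have "(R, a + theta ?l R * c) \<in> Y" using sub assms(7) by (auto simp: tdb_mem)
  moreover have "a + theta ?l R * c \<noteq> s" "a + theta ?l R * c \<noteq> t" using ac ne c0 by (auto simp: tdb_mem)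
  ultimately show ?thesis by blast
qed

lemma lemA':
  assumes "grp P \<subseteq> Y" "(Q,t) \<in> Y" "P \<in> D" "Q \<in> D" "P \<noteq> Q" "R \<in> lineD P Q" "R \<noteq> P" "R \<noteq> Q"
  shows "grp R \<subseteq> Y"
proof
  fix x assume "x \<in> grp R"
  then obtain v where x: "x = (R,v)" by (auto simp: grp_def)
  let ?l = "lineD P Q"
  have l: "?l \<in> BD" using assms by (intro lineD_in_BD)
  have inl: "P \<in> ?l" "Q \<in> ?l" using in_lineD[OF assms(3,4)] by auto
  obtain a c where ac: "(Q,t) \<in> tdb ?l a c" "(R,v) \<in> tdb ?l a c"
    using td_solve[OF l inl(2) assms(6) assms(8)[symmetric]] by blast
  have P': "(P, a + theta ?l P * c) \<in> tdb ?l a c" using inl by (simp add: tdb_mem)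
  have PY: "(P, a + theta ?l P * c) \<in> Y" using assms(1) by (auto simp: grp_def)
  have bx: "tdb ?l a c \<in> BX" using l by (auto simp: BX_def)
  have "tdb ?l a c \<subseteq> Y" by (rule blkY[OF bx PY assms(2) _ P' ac(1)]) (use assms(5) in simp)
  then show "x \<in> Y" using ac x by blast
qed

lemma lemA:
  assumes "grp P \<subseteq> Y" "(Q,t) \<in> Y" "P \<in> D" "Q \<in> D" "P \<noteq> Q" "R \<in> lineD P Q"
  shows "grp R \<subseteq> Y"
proof -
  let ?l = "lineD P Q"
  have l: "?l \<in> BD" using assms by (intro lineD_in_BD)
  have inl: "P \<in> ?l" "Q \<in> ?l" using in_lineD[OF assms(3,4)] by auto
  show ?thesis
  proof (cases "R = P \<or> R = Q")
    case False then show ?thesis using lemA'[OF assms] by blast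
  next
    case True
    show ?thesis
    proof (cases "R = P")
      case True then show ?thesis using assms by simp
    next
      case False
      then have RQ: "R = Q" using \<open>R = P \<or> R = Q\<close> by blast
      have "card ?l \<ge> 3" using BD_props(3)[OF l] by auto
      then have "\<exists>R'. R' \<in> ?l \<and> R' \<noteq> P \<and> R' \<noteq> Q"
      proof -
        have "\<not> ?l \<subseteq> {P,Q}"
        proof
          assume "?l \<subseteq> {P,Q}"
          then have "card ?l \<le> card {P,Q}" by (intro card_mono) auto
          then show False using \<open>card ?l \<ge> 3\<close> card2_le[of P Q] by simp
        qed
        then show ?thesis by blast
      qed
      then obtain R' where R': "R' \<in> ?l" "R' \<noteq> P" "R' \<noteq> Q" by blast
      have gR': "grp R' \<subseteq> Y" using lemA'[OF assms(1-5) R'] .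
      have R'D: "R' \<in> D" using R' BD_props(1)[OF l] by blast
      have "?l = lineD R' P" using BD_unique[OF l R'(1) inl(1) R'(2)] .
      then have "Q \<in> lineD R' P" using inl by simp
      moreover have "(P,0) \<in> Y" using assms(1) by (auto simp: grp_def)
      ultimately show ?thesis using lemA'[OF gR' _ R'D assms(3) R'(2), of 0 Q] RQ assms(5) R'(3) by auto
    qed
  qed
qed

lemma Z_closed: "lclosed {R \<in> D. grp R \<subseteq> Y}"
  unfolding lclosed_def
proof (intro ballI impI subsetI)
  fix x y z assume h: "x \<in> {R \<in> D. grp R \<subseteq> Y}" "y \<in> {R \<in> D. grp R \<subseteq> Y}" "x \<noteq> y" "z \<in> lineD x y"
  have "(y,0) \<in> Y" using h(2) by (auto simp: grp_def)
  then have "grp z \<subseteq> Y" using lemA[of x y 0 z] h by simp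
  moreover have "z \<in> D" using h(4) lineD_sub by blast
  ultimately show "z \<in> {R \<in> D. grp R \<subseteq> Y}" by blast
qed

end

definition Q0 :: V where "Q0 = vv 0 0 T3 1"
definition Q1 :: V where "Q1 = vv T3 0 T3 1"
definition Q2 :: V where "Q2 = vv 0 T3 T3 1"

lemma in_lineI: "x \<in> D \<Longrightarrow> x = a *s P + b *s Q \<Longrightarrow> x \<in> lineD P Q"
  unfolding lineD_iff by blast

lemmas vdefs = O0_def A1_def A2_def A3_def E1_def E2_def E12_def Q0_def Q1_def Q2_def

lemma QD: "Q0 \<in> D" "Q1 \<in> D" "Q2 \<in> D" by (simp_all add: D_iff Q0_def Q1_def Q2_def)

lemma lines_conc:
  "E1 \<in> lineD O0 A1" "E2 \<in> lineD O0 A2" "E12 \<in> lineD A1 A2"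
  "Q0 \<in> lineD O0 A3" "Q1 \<in> lineD A1 A3" "Q2 \<in> lineD A2 A3"
  "E1 \<in> lineD Q0 Q1" "E2 \<in> lineD Q0 Q2" "E12 \<in> lineD Q1 Q2"
  apply (rule in_lineI[where a=T3 and b=1]; simp add: D_iff vec_eq4 vdefs)
  apply (rule in_lineI[where a=T3 and b=1]; simp add: D_iff vec_eq4 vdefs)
  apply (rule in_lineI[where a=1 and b=T3]; simp add: D_iff vec_eq4 vdefs)
  apply (rule in_lineI[where a=T3 and b=T3]; simp add: D_iff vec_eq4 vdefs)
  apply (rule in_lineI[where a=T3 and b=T3]; simp add: D_iff vec_eq4 vdefs)
  apply (rule in_lineI[where a=T3 and b=T3]; simp add: D_iff vec_eq4 vdefs)
  apply (rule in_lineI[where a=1 and b=T3]; simp add: D_iff vec_eq4 vdefs)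
  apply (rule in_lineI[where a=1 and b=T3]; simp add: D_iff vec_eq4 vdefs)
  apply (rule in_lineI[where a=T3 and b=1]; simp add: D_iff vec_eq4 vdefs)
  done

lemma dists:
  "O0 \<noteq> A1" "O0 \<noteq> A2" "A1 \<noteq> A2" "O0 \<noteq> A3" "A1 \<noteq> A3" "A2 \<noteq> A3"
  "Q0 \<noteq> O0" "Q0 \<noteq> A3" "Q1 \<noteq> A1" "Q1 \<noteq> A3" "Q2 \<noteq> A2" "Q2 \<noteq> A3"
  "Q0 \<noteq> Q1" "Q0 \<noteq> Q2" "Q1 \<noteq> Q2"
  "E1 \<noteq> O0" "E1 \<noteq> A1" "E1 \<noteq> A2" "E1 \<noteq> A3"
  "E2 \<noteq> O0" "E2 \<noteq> A1" "E2 \<noteq> A2" "E2 \<noteq> A3"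
  "E12 \<noteq> O0" "E12 \<noteq> A1" "E12 \<noteq> A2" "E12 \<noteq> A3"
  by (simp_all add: vec_eq4 vdefs)

lemma F4_other: "(v::F4) \<noteq> 0 \<Longrightarrow> v \<noteq> 1 \<Longrightarrow> v = W4 \<or> v = V4"
  by (cases v) (auto simp: zero_F4_def one_F4_def)

definition S0 :: "XP set" where "S0 = {(O0,0),(A1,0),(A2,0),(A3,1)}"

lemma S0_card: "card S0 = 4"
  unfolding S0_def using dists by (intro card4) auto

lemma S0_sub: "S0 \<subseteq> XX"
  using basic_in_D by (auto simp: S0_def XX_def)

lemma finish:
  assumes fl: "is_flat XX BX Y" and S: "S0 \<subseteq> Y" and E: "E \<in> D" "grp E \<subseteq> Y"
    "E \<noteq> O0" "E \<noteq> A1" "E \<noteq> A2" "E \<noteq> A3"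
  shows "Y = XX"
proof -
  let ?Z = "{R \<in> D. grp R \<subseteq> Y}"
  have pts: "(O0,0) \<in> Y" "(A1,0) \<in> Y" "(A2,0) \<in> Y" "(A3,1) \<in> Y" using S by (auto simp: S0_def)
  have "grp O0 \<subseteq> Y" using lemA[OF fl E(2) pts(1) E(1) basic_in_D(3) E(3)] in_lineD[OF E(1) basic_in_D(3)] by blast
  moreover have "grp A1 \<subseteq> Y" using lemA[OF fl E(2) pts(2) E(1) basic_in_D(5) E(4)] in_lineD[OF E(1) basic_in_D(5)] by blast
  moreover have "grp A2 \<subseteq> Y" using lemA[OF fl E(2) pts(3) E(1) basic_in_D(6) E(5)] in_lineD[OF E(1) basic_in_D(6)] by blast
  moreover have "grp A3 \<subseteq> Y" using lemA[OF fl E(2) pts(4) E(1) basic_in_D(4) E(6)] in_lineD[OF E(1) basic_in_D(4)] by blast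
  ultimately have "D \<subseteq> ?Z" using closure_D[OF Z_closed[OF fl]] basic_in_D by blast
  then have "XX \<subseteq> Y" by (auto simp: XX_def grp_def)
  moreover have "Y \<subseteq> XX" using fl by (simp add: is_flat_def)
  ultimately show ?thesis by blast
qed

lemma gen_X:
  assumes fl: "is_flat XX BX Y" and S: "S0 \<subseteq> Y"
  shows "Y = XX"
proof -
  have pts: "(O0,0) \<in> Y" "(A1,0) \<in> Y" "(A2,0) \<in> Y" "(A3,1) \<in> Y" using S by (auto simp: S0_def)
  note D = basic_in_D QD
  note L = lines_conc
  have z1: "(E1,0) \<in> Y" by (rule R2[OF fl pts(1,2) D(3) D(5) dists(1) L(1)])
  have z2: "(E2,0) \<in> Y" by (rule R2[OF fl pts(1,3) D(3) D(6) dists(2) L(2)])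
  have z3: "(E12,0) \<in> Y" by (rule R2[OF fl pts(2,3) D(5) D(6) dists(3) L(3)])
  have n01: "(0::F4) \<noteq> 1" by simp
  obtain v0 where v0: "(Q0,v0) \<in> Y" "v0 \<noteq> 0" "v0 \<noteq> 1"
    using rainbow[OF fl pts(1) pts(4) D(3) D(4) dists(4) n01 L(4) dists(7) dists(8)] by blast
  obtain v1 where v1: "(Q1,v1) \<in> Y" "v1 \<noteq> 0" "v1 \<noteq> 1"
    using rainbow[OF fl pts(2) pts(4) D(5) D(4) dists(5) n01 L(5) dists(9) dists(10)] by blast
  obtain v2 where v2: "(Q2,v2) \<in> Y" "v2 \<noteq> 0" "v2 \<noteq> 1"
    using rainbow[OF fl pts(3) pts(4) D(6) D(4) dists(6) n01 L(6) dists(11) dists(12)] by blast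
  have "v0 = v1 \<or> v0 = v2 \<or> v1 = v2" using F4_other v0 v1 v2 by metis
  then show ?thesis
  proof (elim disjE)
    assume "v0 = v1"
    then have "(E1,v0) \<in> Y" using R2[OF fl v0(1) _ QD(1) QD(2) dists(13) L(7)] v1(1) by simp
    then have "grp E1 \<subseteq> Y" using grpY[OF fl z1 _ _ D(1)] v0(2) by metis
    then show ?thesis using finish[OF fl S D(1)] dists by blast
  next
    assume "v0 = v2"
    then have "(E2,v0) \<in> Y" using R2[OF fl v0(1) _ QD(1) QD(3) dists(14) L(8)] v2(1) by simp
    then have "grp E2 \<subseteq> Y" using grpY[OF fl z2 _ _ D(2)] v0(2) by metis
    then show ?thesis using finish[OF fl S D(2)] dists by blast
  next
    assume "v1 = v2"
    then have "(E12,v1) \<in> Y" using R2[OF fl v1(1) _ QD(2) QD(3) dists(15) L(9)] v2(1) by simp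
    then have "grp E12 \<subseteq> Y" using grpY[OF fl z3 _ _ D(7)] v1(2) by metis
    then show ?thesis using finish[OF fl S D(7)] dists by blast
  qed
qed

lemma pbd_blocks: "pbd X B K \<Longrightarrow> \<forall>b\<in>B. b \<subseteq> X \<and> card b \<in> K"
  unfolding pbd_def by (elim conjE)

lemma pbd_fin: "pbd X B K \<Longrightarrow> finite X"
  unfolding pbd_def by (elim conjE)

lemma pbd_K: "pbd X B K \<Longrightarrow> K \<subseteq> {2..}"
  unfolding pbd_def by (elim conjE)

lemma pbd_sub: "pbd X B K \<Longrightarrow> b \<in> B \<Longrightarrow> b \<subseteq> X"
  using pbd_blocks by fast

lemma ex1_eq: "\<exists>!x. P x \<Longrightarrow> P a \<Longrightarrow> P b \<Longrightarrow> a = b" by blast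

lemma tr_pbd:
  assumes inj: "inj_on f X" and p: "pbd X B K"
  shows "pbd (f ` X) ((`) f ` B) K"
proof -
  have fin: "finite X" and K: "K \<subseteq> {2..}" and bl: "\<And>b. b \<in> B \<Longrightarrow> b \<subseteq> X \<and> card b \<in> K"
    using pbd_fin[OF p] pbd_K[OF p] pbd_blocks[OF p] by auto
  have blocks: "\<forall>b\<in>(`) f ` B. b \<subseteq> f ` X \<and> card b \<in> K"
  proof
    fix b' assume "b' \<in> (`) f ` B"
    then obtain b where b: "b \<in> B" "b' = f ` b" by blast
    have "card (f ` b) = card b" using card_image[OF inj_on_subset[OF inj]] bl[OF b(1)] by blast
    then show "b' \<subseteq> f ` X \<and> card b' \<in> K" using bl[OF b(1)] b by auto
  qed
  have pairs: "\<forall>x\<in>f ` X. \<forall>y\<in>f ` X. x \<noteq> y \<longrightarrow> (\<exists>!b. b \<in> (`) f ` B \<and> x \<in> b \<and> y \<in> b)"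
  proof (intro ballI impI)
    fix x' y' assume h: "x' \<in> f ` X" "y' \<in> f ` X" "x' \<noteq> y'"
    then obtain x y where xy: "x \<in> X" "y \<in> X" "x' = f x" "y' = f y" by blast
    then have "x \<noteq> y" using h by blast
    then have e: "\<exists>!b. b \<in> B \<and> x \<in> b \<and> y \<in> b" using pbd_ex1[OF p xy(1,2)] by blast
    then obtain b where b: "b \<in> B" "x \<in> b" "y \<in> b" by blast
    show "\<exists>!b. b \<in> (`) f ` B \<and> x' \<in> b \<and> y' \<in> b"
    proof (rule ex1I[of _ "f ` b"])
      show "f ` b \<in> (`) f ` B \<and> x' \<in> f ` b \<and> y' \<in> f ` b" using b xy by auto
      fix c' assume c': "c' \<in> (`) f ` B \<and> x' \<in> c' \<and> y' \<in> c'"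
      then obtain c where c: "c \<in> B" "c' = f ` c" by blast
      have cX: "c \<subseteq> X" using bl[OF c(1)] by blast
      have "x \<in> c" using c' c inj_on_image_mem_iff[OF inj xy(1) cX] xy(3) by simp
      moreover have "y \<in> c" using c' c inj_on_image_mem_iff[OF inj xy(2) cX] xy(4) by simp
      ultimately have "c = b" using ex1_eq[OF e, of c b] b c(1) by blast
      then show "c' = f ` b" using c by simp
    qed
  qed
  show ?thesis unfolding pbd_def using fin by (intro conjI finite_imageI K blocks pairs)
qed

lemma tr_flat_fwd:
  assumes inj: "inj_on f X" and p: "pbd X B K" and fl: "is_flat X B Y"
  shows "is_flat (f ` X) ((`) f ` B) (f ` Y)"
proof -
  have YX: "Y \<subseteq> X" using fl unfolding is_flat_def by blast
  show ?thesis
  proof (rule flat_intro[OF tr_pbd[OF inj p]])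
    show "f ` Y \<subseteq> f ` X" using YX by blast
    fix u' w' b' assume h: "u' \<in> f ` Y" "w' \<in> f ` Y" "u' \<noteq> w'" "b' \<in> (`) f ` B" "u' \<in> b'" "w' \<in> b'"
    obtain u w where uw: "u \<in> Y" "w \<in> Y" "u' = f u" "w' = f w" using h by blast
    obtain c where c: "c \<in> B" "b' = f ` c" using h by blast
    have cX: "c \<subseteq> X" using pbd_sub[OF p c(1)] .
    have uc: "u \<in> c" using h(5) uw(1,3) c(2) inj_on_image_mem_iff[OF inj _ cX, of u] YX by blast
    have "w \<in> c" using h(6) uw(2,4) c(2) inj_on_image_mem_iff[OF inj _ cX, of w] YX by blast
    moreover have "u \<noteq> w" using h(3) uw(3,4) by auto
    ultimately have "c \<subseteq> Y" using flat_block[OF p fl uw(1,2) _ c(1)] uc by simp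
    then show "b' \<subseteq> f ` Y" using c by blast
  qed
qed

lemma tr_flat_bwd:
  assumes inj: "inj_on f X" and p: "pbd X B K" and fl: "is_flat (f ` X) ((`) f ` B) Y'"
  shows "is_flat X B (X \<inter> f -` Y')"
proof (rule flat_intro[OF p])
  show "X \<inter> f -` Y' \<subseteq> X" by blast
  fix u w c assume h: "u \<in> X \<inter> f -` Y'" "w \<in> X \<inter> f -` Y'" "u \<noteq> w" "c \<in> B" "u \<in> c" "w \<in> c"
  have "f u \<noteq> f w" using h(1-3) inj unfolding inj_on_def by blast
  moreover have "f ` c \<in> (`) f ` B" using h by blast
  moreover have "f u \<in> Y'" "f w \<in> Y'" "f u \<in> f ` c" "f w \<in> f ` c" using h by auto
  ultimately have "f ` c \<subseteq> Y'" using flat_block[OF tr_pbd[OF inj p] fl, of "f u" "f w" "f ` c"] by simp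
  then show "c \<subseteq> X \<inter> f -` Y'" using pbd_sub[OF p h(4)] by blast
qed

lemma final_design:
  "\<exists>(X :: nat set) (B :: nat set set). card X = 124 \<and> pbd X B {3, 4} \<and> pbd_dimension X B = 3"
proof -
  obtain f :: "XP \<Rightarrow> nat" and n where f: "f ` XX = {i. i < n}" "inj_on f XX"
    using finite_imp_inj_to_nat_seg[OF finite_XX] by blast
  let ?X = "f ` XX" and ?B = "(`) f ` BX"
  have p: "pbd ?X ?B {3,4}" by (rule tr_pbd[OF f(2) pbd_X])
  have c: "card ?X = 124" using card_image[OF f(2)] card_XX by simp
  have fin: "finite ?X" using finite_XX by simp
  have d3: "dim_prop ?X ?B 3"
    unfolding dim_prop_def
  proof (intro allI impI)
    fix S' assume S': "S' \<subseteq> ?X \<and> card S' = 3"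
    let ?S = "XX \<inter> f -` S'"
    have SS: "f ` ?S = S'" using S' by blast
    have "card ?S = 3" using S' SS card_image[OF inj_on_subset[OF f(2), of ?S]] by auto
    then obtain Y where Y: "proper_flat XX BX Y" "?S \<subseteq> Y"
      using dim3_X unfolding dim_prop_def by blast
    have fl: "is_flat ?X ?B (f ` Y)" using tr_flat_fwd[OF f(2) pbd_X] Y(1) unfolding proper_flat_def by blast
    have YX: "Y \<subseteq> XX" "Y \<noteq> XX" using Y(1) unfolding proper_flat_def is_flat_def by blast+
    have "f ` Y \<noteq> ?X"
    proof
      assume "f ` Y = ?X"
      then have "XX \<subseteq> Y" using YX f(2) by (auto dest: inj_onD)
      then show False using YX by blast
    qed
    moreover have "S' \<subseteq> f ` Y" using Y(2) SS by blast
    ultimately show "\<exists>Y. proper_flat ?X ?B Y \<and> S' \<subseteq> Y" using fl unfolding proper_flat_def by blast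
  qed
  have "pbd_dimension ?X ?B = 3"
  proof (rule dimension_eq3[OF fin _ d3])
    show "4 \<le> card ?X" using c by simp
    show "f ` S0 \<subseteq> ?X" using S0_sub by blast
    show "card (f ` S0) = 4" using card_image[OF inj_on_subset[OF f(2) S0_sub]] S0_card by simp
    fix Y' assume Y': "is_flat ?X ?B Y'" "f ` S0 \<subseteq> Y'"
    have "is_flat XX BX (XX \<inter> f -` Y')" by (rule tr_flat_bwd[OF f(2) pbd_X Y'(1)])
    moreover have "S0 \<subseteq> XX \<inter> f -` Y'" using Y'(2) S0_sub by blast
    ultimately have "XX \<inter> f -` Y' = XX" using gen_X by blast
    then have "?X \<subseteq> Y'" by blast
    moreover have "Y' \<subseteq> ?X" using Y'(1) unfolding is_flat_def by blast
    ultimately show "Y' = ?X" by blast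
  qed
  then show ?thesis using p c by blast
qed

theorem proposition3p3:
  shows "\<exists>(X :: nat set) (B :: nat set set).
           card X = 124 \<and> pbd X B {3, 4} \<and> pbd_dimension X B = 3"
  by (rule final_design)

end
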